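(* Let $p$ be an odd prime, let $l>2$ be an integer with $l\mid p-1$, and let $\omega$ be a primitive $l$-th root of unity in $\mathbb{F}_p$. For $(r_1,r_2,r_3)\in\{(1,0,3),(0,3,1),(0,1,3)\}$ let $\mathcal{C}_{(r_1,r_2,r_3)}$ be the cyclic code over $\mathbb{F}_p$ generated by $(x-1)^{r_1}(x+1)^{r_2}(x-\omega)^{r_3}$, of length $lp$ when $r_2=0$, and of length $lp$ if $l$ is even, $2lp$ if $l$ is odd, when $r_2\neq 0$. For $(r_1,r_2,r_3)\in\{(0,3,1),(0,1,3)\}$ assume additionally that $l$ is odd or $l\equiv 0\pmod 4$. Then $\mathcal{C}_{(r_1,r_2,r_3)}$ is an MDS symbol-pair code with minimum symbol-pair distance $d_p=6$.
   Context: For $\mathbf{x}=(x_0,\dots,x_{n-1})\in\mathbb{F}_p^n$, the symbol-pair weight is $\omega_p(\mathbf{x})=|\{i:(x_i,x_{i+1})\neq(0,0)\}|$ (indices modulo $n$), and the symbol-pair distance is $D_p(\mathbf{x},\mathbf{y})=|\{i:(x_i,x_{i+1})\neq(y_i,y_{i+1})\}|$. The minimum symbol-pair distance is the minimum of $D_p$ over distinct codewords. A code of length $n$ with minimum symbol-pair distance $d_p$ is an MDS symbol-pair code if $|\mathcal{C}|=p^{n-d_p+2}$. The cyclic code generated by $g(x)\mid x^n-1$ is the ideal $\langle g(x)\rangle$ in $\mathbb{F}_p[x]/\langle x^n-1\rangle$. *)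

theory Defs
  imports "HOL-Computational_Algebra.Polynomial" "HOL-Library.Cardinality"
begin

text \<open>Vectors of length n over a field are functions nat => 'a; only indices 0..n-1 matter,
  and indices are taken modulo n.\<close>

definition sp_weight :: "nat \<Rightarrow> (nat \<Rightarrow> 'a::zero) \<Rightarrow> nat" where
  "sp_weight n x = card {i \<in> {0..<n}. (x i, x ((i + 1) mod n)) \<noteq> (0, 0)}"

definition sp_dist :: "nat \<Rightarrow> (nat \<Rightarrow> 'a) \<Rightarrow> (nat \<Rightarrow> 'a) \<Rightarrow> nat" where
  "sp_dist n x y = card {i \<in> {0..<n}. (x i, x ((i + 1) mod n)) \<noteq> (y i, y ((i + 1) mod n))}"

definition min_sp_dist :: "nat \<Rightarrow> (nat \<Rightarrow> 'a) set \<Rightarrow> nat" where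
  "min_sp_dist n C = Min {sp_dist n x y | x y. x \<in> C \<and> y \<in> C \<and> x \<noteq> y}"

text \<open>The cyclic code of length n generated by g: the ideal generated by g in
  F[x]/(x^n - 1), each residue represented by its reduced polynomial of degree < n,
  and the codeword being its coefficient vector (c_0,...,c_{n-1}).\<close>

definition cyclic_code :: "nat \<Rightarrow> 'a::field poly \<Rightarrow> (nat \<Rightarrow> 'a) set" where
  "cyclic_code n g = {(\<lambda>i. if i < n then coeff c i else 0) | c.
      \<exists>a. c = (a * g) mod (monom 1 n - 1)}"

definition MDS_symbol_pair :: "nat \<Rightarrow> nat \<Rightarrow> (nat \<Rightarrow> 'a) set \<Rightarrow> nat \<Rightarrow> bool" where
  "MDS_symbol_pair q n C d = (min_sp_dist n C = d \<and> card C = q ^ (n + 2 - d))"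

definition primitive_root_unity :: "nat \<Rightarrow> 'a::field \<Rightarrow> bool" where
  "primitive_root_unity l w = (w ^ l = 1 \<and> (\<forall>k. 0 < k \<and> k < l \<longrightarrow> w ^ k \<noteq> 1))"

end

theory Submission imports Defs "HOL-Number_Theory.Cong" "HOL-Library.FuncSet" begin

definition vecn :: "nat \<Rightarrow> 'a::zero poly \<Rightarrow> nat \<Rightarrow> 'a" where
  "vecn n c = (\<lambda>i. if i < n then coeff c i else 0)"

definition polv :: "nat \<Rightarrow> (nat \<Rightarrow> 'a::comm_ring_1) \<Rightarrow> 'a poly" where
  "polv n v = (\<Sum>i<n. monom (v i) i)"

lemma coeff_polv: "coeff (polv n v) j = (if j < n then v j else 0)"
  unfolding polv_def by (simp add: coeff_sum coeff_monom)

lemma vecn_polv: "(\<forall>i\<ge>n. v i = 0) \<Longrightarrow> vecn n (polv n v) = v"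
  by (auto simp: vecn_def coeff_polv fun_eq_iff)

lemma polv_vecn: "degree c < n \<Longrightarrow> polv n (vecn n c) = c"
  by (rule poly_eqI) (auto simp: coeff_polv vecn_def coeff_eq_0)

lemma degree_polv: "n > 0 \<Longrightarrow> degree (polv n v) < n"
proof -
  assume "n > 0"
  have "degree (polv n v) \<le> n - 1"
    by (rule degree_le) (auto simp: coeff_polv)
  thus ?thesis using \<open>n>0\<close> by linarith
qed

lemma degree_xn1: "n > 0 \<Longrightarrow> degree (monom 1 n - 1 :: 'a::field poly) = n"
proof -
  assume n: "n > 0"
  have "degree (monom 1 n + (- 1) :: 'a poly) = n"
    using n by (subst degree_add_eq_left) (auto simp: degree_monom_eq)
  thus ?thesis by simp
qed

definition inC :: "'a::field poly \<Rightarrow> nat \<Rightarrow> (nat \<Rightarrow> 'a) \<Rightarrow> bool" where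
  "inC g n v = ((\<forall>i\<ge>n. v i = 0) \<and> g dvd polv n v)"

lemma code_eq:
  fixes g :: "'a::field poly"
  assumes "g dvd (monom 1 n - 1)" "n > 0"
  shows "cyclic_code n g = vecn n ` {c. g dvd c \<and> degree c < n}"
proof -
  have m0: "(monom 1 n - 1 :: 'a poly) \<noteq> 0" using degree_xn1[OF assms(2), where 'a='a] assms(2) by auto
  show ?thesis
  proof (intro set_eqI iffI)
    fix x assume "x \<in> cyclic_code n g"
    then obtain a where x: "x = vecn n ((a * g) mod (monom 1 n - 1))"
      unfolding cyclic_code_def vecn_def by auto
    have "g dvd (a * g) mod (monom 1 n - 1)"
      using assms(1) by (simp add: dvd_mod)
    moreover have "degree ((a * g) mod (monom 1 n - 1)) < n"
      using degree_mod_less[OF m0, of "a*g"] degree_xn1[OF assms(2), where 'a='a] assms(2) by auto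
    ultimately show "x \<in> vecn n ` {c. g dvd c \<and> degree c < n}" using x by auto
  next
    fix x assume "x \<in> vecn n ` {c. g dvd c \<and> degree c < n}"
    then obtain c where c: "x = vecn n c" "g dvd c" "degree c < n" by auto
    from c(2) obtain a where "c = g * a" by (elim dvdE)
    hence a: "c = a * g" by (simp add: mult.commute)
    have "c mod (monom 1 n - 1) = c"
      using c(3) by (intro mod_poly_less) (simp add: degree_xn1 assms(2))
    hence "c = (a * g) mod (monom 1 n - 1)" using a by simp
    thus "x \<in> cyclic_code n g" unfolding cyclic_code_def using c(1)
      unfolding vecn_def by blast
  qed
qed

lemma inC_iff:
  fixes g :: "'a::field poly"
  assumes "n > 0"
  shows "v \<in> vecn n ` {c. g dvd c \<and> degree c < n} \<longleftrightarrow> inC g n v"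
proof
  assume "v \<in> vecn n ` {c. g dvd c \<and> degree c < n}"
  then obtain c where "v = vecn n c" "g dvd c" "degree c < n" by auto
  thus "inC g n v" unfolding inC_def by (auto simp: polv_vecn) (auto simp: vecn_def)
next
  assume "inC g n v"
  thus "v \<in> vecn n ` {c. g dvd c \<and> degree c < n}"
    unfolding inC_def using degree_polv[OF assms] vecn_polv[of n v]
    by (intro image_eqI[of _ _ "polv n v"]) auto
qed

definition rot :: "nat \<Rightarrow> (nat \<Rightarrow> 'a::zero) \<Rightarrow> nat \<Rightarrow> 'a" where
  "rot n v = (\<lambda>i. if i < n then v ((i + n - 1) mod n) else 0)"

lemma pCons0_mult: "pCons 0 q = monom 1 1 * (q :: 'a::comm_ring_1 poly)"
  by (rule poly_eqI) (simp add: coeff_pCons coeff_monom_mult split: nat.split)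

lemma polv_rot:
  fixes v :: "nat \<Rightarrow> 'a::field"
  assumes n: "n > 0" and z: "\<forall>i\<ge>n. v i = 0"
  shows "polv n (rot n v) = pCons 0 (polv n v) - smult (v (n-1)) (monom 1 n - 1)"
proof (rule poly_eqI)
  fix j
  show "coeff (polv n (rot n v)) j = coeff (pCons 0 (polv n v) - smult (v (n-1)) (monom 1 n - 1)) j"
  proof (cases j)
    case 0
    then show ?thesis using n by (simp add: coeff_polv rot_def coeff_monom)
  next
    case (Suc k)
    show ?thesis
    proof (cases "Suc k < n")
      case True
      then show ?thesis using n z Suc by (auto simp: coeff_polv rot_def coeff_monom)
    next
      case False
      then show ?thesis using n z Suc
        by (cases "k < n") (auto simp: coeff_polv rot_def coeff_monom intro: arg_cong[where f=v])
    qed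
  qed
qed

lemma inC_rot:
  fixes v :: "nat \<Rightarrow> 'a::field"
  assumes n: "n > 0" and gd: "g dvd (monom 1 n - 1)" and v: "inC g n v"
  shows "inC g n (rot n v)"
proof -
  have z: "\<forall>i\<ge>n. v i = 0" and d: "g dvd polv n v" using v by (auto simp: inC_def)
  have "g dvd pCons 0 (polv n v) - smult (v (n-1)) (monom 1 n - 1)"
    using d gd by (intro dvd_diff) (auto simp: pCons0_mult dvd_smult)
  thus ?thesis using polv_rot[OF n z] by (auto simp: inC_def rot_def)
qed

definition rs :: "nat \<Rightarrow> nat \<Rightarrow> (nat \<Rightarrow> 'a::zero) \<Rightarrow> nat \<Rightarrow> 'a" where
  "rs n s v = (\<lambda>i. if i < n then v ((i + s) mod n) else 0)"

lemma rs_rot: "n > 0 \<Longrightarrow> rs n s v = rot n (rs n (Suc s) v)"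
proof -
  assume n: "n > 0"
  have "((i + n - 1) mod n + Suc s) mod n = (i + s) mod n" if "i < n" for i
  proof -
    have "((i + n - 1) mod n + Suc s) mod n = (i + n - 1 + Suc s) mod n"
      by (rule mod_add_left_eq)
    also have "i + n - 1 + Suc s = (i + s) + n" using n by simp
    finally show ?thesis by simp
  qed
  thus ?thesis using n by (auto simp: rs_def rot_def fun_eq_iff)
qed

lemma rs_n: "\<forall>i\<ge>n. v i = 0 \<Longrightarrow> rs n n v = v"
  by (auto simp: rs_def fun_eq_iff)

lemma inC_rs:
  fixes v :: "nat \<Rightarrow> 'a::field"
  assumes n: "n > 0" and gd: "g dvd (monom 1 n - 1)" and v: "inC g n v" and s: "s \<le> n"
  shows "inC g n (rs n s v)"
proof -
  have "\<forall>s. n - s = d \<longrightarrow> s \<le> n \<longrightarrow> inC g n (rs n s v)" for d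
  proof (induction d)
    case 0
    then show ?case using v rs_n[of n v] by (auto simp: inC_def)
  next
    case (Suc d)
    show ?case
    proof (intro allI impI)
      fix s assume "n - s = Suc d" "s \<le> n"
      hence "n - Suc s = d" "Suc s \<le> n" by auto
      hence "inC g n (rs n (Suc s) v)" using Suc.IH by blast
      thus "inC g n (rs n s v)" using inC_rot[OF n gd] rs_rot[OF n] by metis
    qed
  qed
  thus ?thesis using s by blast
qed

lemma mod_inj_shift: "(i+s) mod n = (j+s) mod (n::nat) \<Longrightarrow> i < n \<Longrightarrow> j < n \<Longrightarrow> i = j"
  by (metis cong_add_rcancel_nat cong_def mod_less)

lemma weight_rs_le:
  assumes n: "n > 0"
  shows "sp_weight n (rs n s v) \<le> sp_weight n v"
  unfolding sp_weight_def
proof (rule card_inj_on_le[where f = "\<lambda>i. (i + s) mod n"])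
  show "inj_on (\<lambda>i. (i + s) mod n) {i \<in> {0..<n}. (rs n s v i, rs n s v ((i + 1) mod n)) \<noteq> (0, 0)}"
    by (auto intro!: inj_onI dest: mod_inj_shift)
  have e: "(Suc i mod n + s) mod n = Suc ((i + s) mod n) mod n" for i
    by presburger
  show "(\<lambda>i. (i + s) mod n) ` {i \<in> {0..<n}. (rs n s v i, rs n s v ((i + 1) mod n)) \<noteq> (0, 0)}
    \<subseteq> {i \<in> {0..<n}. (v i, v ((i + 1) mod n)) \<noteq> (0, 0)}"
    using n by (auto simp: rs_def e)
qed auto

lemma exists_edge:
  fixes v :: "nat \<Rightarrow> 'a::zero"
  assumes n: "n > 0" and zz: "z < n" "v z = 0" and aa: "a < n" "v a \<noteq> 0"
  shows "\<exists>i<n. v i = 0 \<and> v (Suc i mod n) \<noteq> 0"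
proof (rule ccontr)
  assume H: "\<not> ?thesis"
  have "v ((z + t) mod n) = 0" for t
  proof (induction t)
    case 0 then show ?case using zz by simp
  next
    case (Suc t)
    have "(z + t) mod n < n" using n by simp
    hence "v (Suc ((z + t) mod n) mod n) = 0" using H Suc by blast
    thus ?case by (simp add: mod_Suc_eq)
  qed
  from this[of "a + n - z"] have "v ((a + n) mod n) = 0" using zz by simp
  thus False using aa by simp
qed

lemma six_le:
  assumes "finite T" "{a,b,c,d,e,f} \<subseteq> T" "distinct [a,b,c,d,e,f]"
  shows "6 \<le> card T"
proof -
  have "card {a,b,c,d,e,f} = 6" using assms(3) by simp
  thus ?thesis using card_mono[OF assms(1,2)] by simp
qed

lemma comb:
  fixes v :: "nat \<Rightarrow> 'a::zero"
  assumes n: "n \<ge> 6" and z: "\<forall>i\<ge>n. v i = 0" and v0: "v 0 \<noteq> 0" and vl: "v (n-1) = 0"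
    and w: "sp_weight n v \<le> 5"
  shows "(\<forall>i\<ge>4. v i = 0) \<or>
         (\<exists>k. 4 \<le> k \<and> k \<le> n-2 \<and> v k \<noteq> 0 \<and> (\<forall>i. i \<noteq> 0 \<and> i \<noteq> 1 \<and> i \<noteq> k \<longrightarrow> v i = 0)) \<or>
         (\<exists>k. 4 \<le> k \<and> k \<le> n-2 \<and> v k \<noteq> 0 \<and> v (k-1) \<noteq> 0 \<and>
              (\<forall>i. i \<noteq> 0 \<and> i \<noteq> k-1 \<and> i \<noteq> k \<longrightarrow> v i = 0))"
proof (cases "\<forall>i\<ge>4. v i = 0")
  case True then show ?thesis by blast
next
  case False
  define T where "T = {i \<in> {0..<n}. (v i, v ((i + 1) mod n)) \<noteq> (0, 0)}"
  have fT: "finite T" unfolding T_def by simp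
  have cT: "card T \<le> 5" using w unfolding sp_weight_def T_def .
  define S where "S = {i. v i \<noteq> 0}"
  have "S \<subseteq> {..<n}"
  proof
    fix i assume "i \<in> S"
    hence "v i \<noteq> 0" by (simp add: S_def)
    thus "i \<in> {..<n}" using z by (meson lessThan_iff not_le)
  qed
  hence fS: "finite S" by (rule finite_subset) simp
  obtain i0 where i0: "i0 \<ge> 4" "v i0 \<noteq> 0" using False by auto
  define k where "k = Max S"
  have kS: "k \<in> S" unfolding k_def using fS i0 by (intro Max_in) (auto simp: S_def)
  have kmax: "\<And>i. v i \<noteq> 0 \<Longrightarrow> i \<le> k" unfolding k_def using fS by (auto simp: S_def)
  have vk: "v k \<noteq> 0" using kS by (simp add: S_def)
  have k4: "k \<ge> 4" using kmax[OF i0(2)] i0 by simp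
  have kn: "k < n" using vk z by (meson not_less)
  have kn2: "k \<le> n - 2" using kn vk vl by (cases "k = n - 1") auto
  have above: "\<And>i. i > k \<Longrightarrow> v i = 0" using kmax by (meson not_less)
  have memT: "i \<in> T" if "i < n" "v i \<noteq> 0" for i using that by (simp add: T_def)
  have memT': "i - 1 \<in> T" if "1 \<le> i" "i < n" "v i \<noteq> 0" for i
  proof -
    have "(i - 1 + 1) mod n = i" using that by simp
    thus ?thesis using that by (simp add: T_def)
  qed
  have nT: "n - 1 \<in> T"
  proof -
    have "(n - 1 + 1) mod n = 0" using n by simp
    thus ?thesis using n v0 by (simp add: T_def)
  qed
  have mid: "v i = 0" if "2 \<le> i" "i \<le> k - 2" for i
  proof (rule ccontr)
    assume vi: "v i \<noteq> 0"
    have "i < n" using that kn by linarith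
    have "{n-1, 0, i-1, i, k-1, k} \<subseteq> T"
      using nT memT[OF _ v0] memT[OF \<open>i < n\<close> vi] memT'[OF _ \<open>i < n\<close> vi] memT[OF kn vk] memT'[OF _ kn vk] that k4 kn
      by simp
    moreover have "distinct [n-1, 0, i-1, i, k-1, k]" using that k4 kn2 n by auto
    ultimately have "6 \<le> card T" by (rule six_le[OF fT])
    thus False using cT by simp
  qed
  have one: "v 1 = 0 \<or> v (k-1) = 0"
  proof (rule ccontr)
    assume "\<not> ?thesis"
    hence v1: "v 1 \<noteq> 0" and vk1: "v (k-1) \<noteq> 0" by auto
    have k1n: "k - 1 < n" using kn by linarith
    have "1 < n" using n by linarith
    have "k - 1 - 1 = k - 2" by simp
    hence "k - 2 \<in> T" using memT'[OF _ k1n vk1] k4 by simp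
    hence "{n-1, 0, 1, k-2, k-1, k} \<subseteq> T"
      using nT memT[OF _ v0] memT[OF \<open>1 < n\<close> v1] memT[OF k1n vk1] memT[OF kn vk] n
      by simp
    moreover have "distinct [n-1, 0, 1, k-2, k-1, k]" using k4 kn2 n by auto
    ultimately have "6 \<le> card T" by (rule six_le[OF fT])
    thus False using cT by simp
  qed
  show ?thesis
  proof (cases "v (k-1) = 0")
    case True
    have "\<forall>i. i \<noteq> 0 \<and> i \<noteq> 1 \<and> i \<noteq> k \<longrightarrow> v i = 0"
    proof (intro allI impI)
      fix i assume i: "i \<noteq> 0 \<and> i \<noteq> 1 \<and> i \<noteq> k"
      show "v i = 0"
      proof (cases "i > k")
        case True then show ?thesis using above by blast
      next
        case False
        then have "i = k - 1 \<or> (2 \<le> i \<and> i \<le> k - 2)" using i by auto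
        then show ?thesis using mid \<open>v (k-1) = 0\<close> by blast
      qed
    qed
    then show ?thesis using k4 kn2 vk by blast
  next
    case False
    hence v1: "v 1 = 0" using one by blast
    have "\<forall>i. i \<noteq> 0 \<and> i \<noteq> k-1 \<and> i \<noteq> k \<longrightarrow> v i = 0"
    proof (intro allI impI)
      fix i assume i: "i \<noteq> 0 \<and> i \<noteq> k-1 \<and> i \<noteq> k"
      show "v i = 0"
      proof (cases "i > k")
        case True then show ?thesis using above by blast
      next
        case False
        then have "i = 1 \<or> (2 \<le> i \<and> i \<le> k - 2)" using i by auto
        then show ?thesis using mid v1 by blast
      qed
    qed
    then show ?thesis using k4 kn2 vk False by blast
  qed
qed

lemma polv_sparse:
  fixes w :: "nat \<Rightarrow> 'a::field"
  assumes "2 \<le> j" "j < n" "\<forall>i. i \<noteq> 0 \<and> i \<noteq> 1 \<and> i \<noteq> j \<longrightarrow> w i = 0"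
  shows "polv n w = [:w 0, w 1:] + monom (w j) j"
proof (rule poly_eqI)
  fix i
  show "coeff (polv n w) i = coeff ([:w 0, w 1:] + monom (w j) j) i"
    using assms by (cases "i = 0"; cases "i = 1"; cases "i = j")
      (auto simp: coeff_polv coeff_monom coeff_pCons split: nat.split)
qed

lemma lower_bound:
  fixes g :: "'a::field poly"
  assumes n: "n \<ge> 6" and gd: "g dvd (monom 1 n - 1)" and dg: "degree g = 4"
    and alg: "\<And>u v w j. u \<noteq> 0 \<Longrightarrow> w \<noteq> 0 \<Longrightarrow> 2 \<le> j \<Longrightarrow> j < n \<Longrightarrow>
                \<not> g dvd ([:u, v:] + monom w j)"
    and v: "inC g n v" and nz: "v a \<noteq> 0"
  shows "6 \<le> sp_weight n v"
proof (rule ccontr)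
  assume "\<not> 6 \<le> sp_weight n v"
  hence wv: "sp_weight n v \<le> 5" by simp
  have n0: "n > 0" using n by simp
  have zv: "\<forall>i\<ge>n. v i = 0" using v by (simp add: inC_def)
  have an: "a < n" using zv nz by (meson not_le)
  show False
  proof (cases "\<forall>i<n. v i \<noteq> 0")
    case True
    have "{i \<in> {0..<n}. (v i, v ((i + 1) mod n)) \<noteq> (0, 0)} = {0..<n}" using True by auto
    hence "sp_weight n v = n" by (simp add: sp_weight_def)
    thus False using wv n by simp
  next
    case False
    then obtain z where z: "z < n" "v z = 0" by auto
    obtain i where i: "i < n" "v i = 0" "v (Suc i mod n) \<noteq> 0"
      using exists_edge[OF n0 z an nz] by blast
    define s where "s = Suc i mod n"
    define w where "w = rs n s v"
    have sn: "s < n" using n0 by (simp add: s_def)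
    have wC: "inC g n w" unfolding w_def by (rule inC_rs[OF n0 gd v]) (use sn in simp)
    have ww: "sp_weight n w \<le> 5" using weight_rs_le[OF n0, of s v] wv by (simp add: w_def)
    have zw: "\<forall>i\<ge>n. w i = 0" by (simp add: w_def rs_def)
    have w0: "w 0 \<noteq> 0" using i sn n0 by (simp add: w_def rs_def s_def)
    have "(n - 1 + s) mod n = i"
    proof (cases "Suc i < n")
      case True
      hence "n - 1 + s = i + n" using n0 by (simp add: s_def)
      then show ?thesis using i by simp
    next
      case False
      hence "Suc i = n" using i by simp
      then show ?thesis by (simp add: s_def)
    qed
    hence wl: "w (n - 1) = 0" using i n0 by (simp add: w_def rs_def)
    have gpw: "g dvd polv n w" using wC by (simp add: inC_def)
    from comb[OF n zw w0 wl ww] show False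
    proof (elim disjE exE conjE)
      assume H: "\<forall>i\<ge>4. w i = 0"
      have "degree (polv n w) \<le> 3" by (rule degree_le) (use H in \<open>auto simp: coeff_polv\<close>)
      moreover have "polv n w \<noteq> 0"
      proof
        assume "polv n w = 0"
        hence "coeff (polv n w) 0 = 0" by simp
        thus False using w0 n0 by (simp add: coeff_polv)
      qed
      ultimately show False using dvd_imp_degree_le[OF gpw] dg by simp
    next
      fix k assume k: "4 \<le> k" "k \<le> n - 2" "w k \<noteq> 0"
        and H: "\<forall>i. i \<noteq> 0 \<and> i \<noteq> 1 \<and> i \<noteq> k \<longrightarrow> w i = 0"
      have "polv n w = [:w 0, w 1:] + monom (w k) k"
        by (rule polv_sparse) (use k H n in auto)
      thus False using alg[OF w0 k(3), of k "w 1"] gpw k n by simp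
    next
      fix k assume k: "4 \<le> k" "k \<le> n - 2" "w k \<noteq> 0" "w (k - 1) \<noteq> 0"
        and H: "\<forall>i. i \<noteq> 0 \<and> i \<noteq> k - 1 \<and> i \<noteq> k \<longrightarrow> w i = 0"
      define w' where "w' = rs n (k - 1) w"
      have wC': "inC g n w'" unfolding w'_def by (rule inC_rs[OF n0 gd wC]) (use k in simp)
      define j where "j = n - k + 1"
      have j: "2 \<le> j" "j < n" using k n by (auto simp: j_def)
      have H': "\<forall>i. i \<noteq> 0 \<and> i \<noteq> 1 \<and> i \<noteq> j \<longrightarrow> w' i = 0"
      proof (intro allI impI)
        fix i assume i: "i \<noteq> 0 \<and> i \<noteq> 1 \<and> i \<noteq> j"
        show "w' i = 0"
        proof (cases "i < n")
          case False then show ?thesis by (simp add: w'_def rs_def)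
        next
          case True
          show ?thesis
          proof (cases "i + (k - 1) < n")
            case True
            hence "(i + (k - 1)) mod n = i + (k - 1)" by simp
            moreover have "i + (k - 1) \<noteq> 0 \<and> i + (k - 1) \<noteq> k - 1 \<and> i + (k - 1) \<noteq> k"
              using i k by auto
            ultimately show ?thesis using H True \<open>i < n\<close> by (simp add: w'_def rs_def)
          next
            case False
            have lt: "i + (k - 1) - n < n" using \<open>i < n\<close> k by linarith
            have "(i + (k - 1)) mod n = (i + (k - 1) - n) mod n"
              using False by (simp add: le_mod_geq)
            hence "(i + (k - 1)) mod n = i + (k - 1) - n" using lt by simp
            moreover have "i + (k - 1) - n \<noteq> 0 \<and> i + (k - 1) - n \<noteq> k - 1 \<and> i + (k - 1) - n \<noteq> k"
              using i k False \<open>i < n\<close> by (auto simp: j_def)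
            ultimately show ?thesis using H \<open>i < n\<close> by (simp add: w'_def rs_def)
          qed
        qed
      qed
      have w'0: "w' 0 = w (k - 1)" using k n by (simp add: w'_def rs_def)
      have w'j: "w' j = w 0"
      proof -
        have "j + (k - 1) = n" using k n by (simp add: j_def)
        thus ?thesis using j by (simp add: w'_def rs_def)
      qed
      have "polv n w' = [:w' 0, w' 1:] + monom (w' j) j"
        by (rule polv_sparse[OF j H'])
      moreover have "g dvd polv n w'" using wC' by (simp add: inC_def)
      ultimately show False using alg[of "w' 0" "w' j" j "w' 1"] j w'0 w'j k w0 by simp
    qed
  qed
qed

lemma of_nat_card_zero: "of_nat CARD('a) = (0::'a::{field,finite})"
proof -
  have "(\<Sum>x\<in>(UNIV::'a set). x + 1) = (\<Sum>x\<in>UNIV. x)"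
    by (rule sum.reindex_bij_witness[of _ "\<lambda>x. x - 1" "\<lambda>x. x + 1"]) auto
  hence "(\<Sum>x\<in>(UNIV::'a set). x) + of_nat CARD('a) = (\<Sum>x\<in>UNIV. x)"
    by (simp add: sum.distrib)
  thus ?thesis by simp
qed

lemma CHAR_eq_card:
  assumes "CARD('a::{field,finite}) = p" "prime p"
  shows "CHAR('a) = p"
proof -
  have "CHAR('a) dvd p" using of_nat_card_zero[where 'a='a] assms(1)
    by (simp add: of_nat_eq_0_iff_char_dvd)
  moreover have "CHAR('a) \<noteq> 1" by simp
  ultimately show ?thesis using assms(2) by (metis One_nat_def prime_nat_iff)
qed

lemma pderiv_dvd:
  fixes f :: "'a::field poly"
  assumes "[:-a, 1:] ^ Suc m dvd f"
  shows "[:-a, 1:] ^ m dvd pderiv f"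
proof -
  from assms obtain q where f: "f = [:-a, 1:] ^ Suc m * q" by (elim dvdE)
  have "pderiv f = [:-a, 1:] ^ Suc m * pderiv q + q * (smult (of_nat (Suc m)) ([:-a, 1:] ^ m) * pderiv [:-a, 1:])"
    by (simp add: f pderiv_mult pderiv_power_Suc del: power_Suc)
  also have "\<dots> = [:-a, 1:] ^ m * ([:-a, 1:] * pderiv q + q * smult (of_nat (Suc m)) (pderiv [:-a, 1:]))"
    by (simp add: algebra_simps)
  finally show ?thesis by simp
qed

lemma root3:
  fixes f :: "'a::field poly"
  assumes "[:-a, 1:] ^ 3 dvd f"
  shows "poly f a = 0 \<and> poly (pderiv f) a = 0 \<and> poly (pderiv (pderiv f)) a = 0"
proof -
  have d2: "[:-a, 1:] ^ 2 dvd pderiv f" using pderiv_dvd[of a 2 f] assms by (simp add: numeral_3_eq_3)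
  have d1: "[:-a, 1:] ^ 1 dvd pderiv (pderiv f)" using pderiv_dvd[of a 1 "pderiv f"] d2 by (simp add: numeral_2_eq_2)
  have p3: "[:-a, 1:] dvd [:-a, 1:] ^ 3" by (rule dvd_power) simp
  have p2: "[:-a, 1:] dvd [:-a, 1:] ^ 2" by (rule dvd_power) simp
  have "[:-a, 1:] dvd f" using dvd_trans[OF p3 assms] .
  moreover have "[:-a, 1:] dvd pderiv f" using dvd_trans[OF p2 d2] .
  ultimately show ?thesis using d1 by (simp add: poly_eq_0_iff_dvd)
qed

lemma eval_sparse:
  fixes u v w a :: "'a::field"
  assumes j: "2 \<le> j"
  shows "poly ([:u, v:] + monom w j) a = u + v * a + w * a ^ j"
    and "poly (pderiv ([:u, v:] + monom w j)) a = v + of_nat j * w * a ^ (j - 1)"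
    and "poly (pderiv (pderiv ([:u, v:] + monom w j))) a = of_nat (j - 1) * (of_nat j * w) * a ^ (j - 2)"
  using j by (auto simp: poly_monom pderiv_add pderiv_pCons pderiv_monom algebra_simps numeral_2_eq_2)

lemma alg_core:
  fixes u v w a :: "'a::field"
  assumes u: "u \<noteq> 0" and w: "w \<noteq> 0" and j: "2 \<le> j" and a: "a \<noteq> 0"
    and d: "[:-a, 1:] ^ 3 dvd ([:u, v:] + monom w j)"
  shows "CHAR('a) dvd j \<and> v = 0 \<and> u + w * a ^ j = 0"
proof -
  from root3[OF d] eval_sparse[OF j, of u v w a]
  have E2: "u + v * a + w * a ^ j = 0" and E3: "v + of_nat j * w * a ^ (j - 1) = 0"
    and E4: "of_nat (j - 1) * (of_nat j * w) * a ^ (j - 2) = 0" by auto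
  have aj: "a ^ j = a * a ^ (j - 1)" using j by (cases j) auto
  have "of_nat (j - 1) = (0::'a) \<or> of_nat j = (0::'a)" using E4 w a by auto
  thus ?thesis
  proof
    assume h: "of_nat (j - 1) = (0::'a)"
    have "of_nat j = (of_nat (j - 1) + 1 :: 'a)" using j by (cases j) auto
    hence "of_nat j = (1::'a)" using h by simp
    hence "v = - w * a ^ (j - 1)" using E3 by (simp add: algebra_simps eq_neg_iff_add_eq_0)
    hence "u = 0" using E2 aj by (simp add: algebra_simps)
    thus ?thesis using u by simp
  next
    assume h: "of_nat j = (0::'a)"
    hence "v = 0" using E3 by simp
    thus ?thesis using E2 h by (simp add: of_nat_eq_0_iff_char_dvd)
  qed
qed

lemma root1:
  fixes u v w b :: "'a::field"
  assumes "[:-b, 1:] dvd ([:u, v:] + monom w j)" "2 \<le> j"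
  shows "u + v * b + w * b ^ j = 0"
  using assms eval_sparse(1)[OF assms(2), of u v w b] by (simp add: poly_eq_0_iff_dvd[symmetric])

lemma prim_dvd:
  fixes \<omega> :: "'a::field"
  assumes pr: "primitive_root_unity l \<omega>" and l: "0 < l" and e: "\<omega> ^ j = 1"
  shows "l dvd j"
proof (rule ccontr)
  assume nd: "\<not> l dvd j"
  have wl: "\<omega> ^ l = 1" using pr by (simp add: primitive_root_unity_def)
  have eq: "l * (j div l) + j mod l = j" by simp
  have "\<omega> ^ (l * (j div l) + j mod l) = (\<omega> ^ l) ^ (j div l) * \<omega> ^ (j mod l)"
    by (simp only: power_add power_mult)
  hence "\<omega> ^ (j mod l) = 1" using e wl eq by simp
  moreover have "0 < j mod l" using nd by (simp add: mod_greater_zero_iff_not_dvd)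
  moreover have "j mod l < l" using l by simp
  ultimately show False using pr by (auto simp: primitive_root_unity_def)
qed

lemma prim_facts:
  fixes \<omega> :: "'a::field"
  assumes pr: "primitive_root_unity l \<omega>" and l: "2 < l"
  shows "\<omega> \<noteq> 0" "\<omega> \<noteq> 1" "\<omega> \<noteq> -1" "\<omega> ^ l = 1"
proof -
  show wl: "\<omega> ^ l = 1" using pr by (simp add: primitive_root_unity_def)
  show "\<omega> \<noteq> 0" using wl l by (auto simp: power_0_left)
  show "\<omega> \<noteq> 1" using pr l by (auto simp: primitive_root_unity_def dest: spec[of _ 1])
  show "\<omega> \<noteq> -1"
  proof
    assume "\<omega> = -1"
    hence "\<omega> ^ 2 = 1" by simp
    thus False using pr l by (auto simp: primitive_root_unity_def dest: spec[of _ 2])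
  qed
qed

lemma neg1_ne_1:
  assumes "CHAR('a::field) = p" "odd p"
  shows "(-1::'a) \<noteq> 1"
proof
  assume "(-1::'a) = 1"
  hence "(of_nat 2 :: 'a) = 0" by (simp add: eq_neg_iff_add_eq_0)
  hence "p dvd 2" using assms(1) by (simp only: of_nat_eq_0_iff_char_dvd)
  moreover have "p \<noteq> 0" using assms(2) by presburger
  ultimately have "p \<le> 2" "p \<noteq> 0" by (auto dest: dvd_imp_le)
  hence "p = 1" using assms(2) by presburger
  thus False using assms(1) by simp
qed

lemma cop_lp:
  fixes l p :: nat
  assumes "l dvd p - 1" "p > 1"
  shows "coprime l p"
proof (rule coprimeI)
  fix c assume "c dvd l" "c dvd p"
  hence "c dvd p - 1" "c dvd p" using assms(1) dvd_trans by blast+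
  hence "c dvd p - (p - 1)" by (rule dvd_diff_nat[rotated])
  thus "is_unit c" using assms(2) by simp
qed

lemma sign_contra:
  fixes \<omega> :: "'a::field"
  assumes ch: "CHAR('a) = p" and pp: "prime p" and op: "odd p"
    and pr: "primitive_root_unity l \<omega>" and l: "2 < l" and ld: "l dvd p - 1"
    and lc: "odd l \<or> 4 dvd l" and nn: "n = (if even l then l * p else 2 * l * p)"
    and pj: "p dvd j" and j0: "0 < j" and jn: "j < n" and e: "\<omega> ^ j = (-1) ^ j"
  shows False
proof -
  have p1: "p > 1" using pp prime_gt_1_nat by blast
  have cop: "coprime l p" using cop_lp[OF ld p1] .
  have m1: "(-1::'a) \<noteq> 1" using neg1_ne_1[OF ch op] .
  show False
  proof (cases "even j")
    case True
    hence "\<omega> ^ j = 1" using e by simp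
    hence lj: "l dvd j" using prim_dvd[OF pr] l by simp
    have lpj: "l * p dvd j" using divides_mult[OF lj pj cop] .
    show False
    proof (cases "even l")
      case True
      have "l * p \<le> j" by (rule dvd_imp_le[OF lpj j0])
      moreover have "n = l * p" using nn True by simp
      ultimately show False using jn by linarith
    next
      case False
      have "coprime 2 (l * p)" using False op by simp
      hence "2 * (l * p) dvd j" using divides_mult[OF _ lpj] \<open>even j\<close> by blast
      hence "2 * (l * p) \<le> j" by (rule dvd_imp_le[OF _ j0])
      moreover have "n = 2 * (l * p)" using nn False by simp
      ultimately show False using jn by linarith
    qed
  next
    case False
    hence wj: "\<omega> ^ j = -1" using e by simp
    have "\<omega> ^ (2 * j) = (\<omega> ^ j) ^ 2" by (metis power_mult mult.commute)
    hence "\<omega> ^ (2 * j) = 1" using wj by simp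
    hence l2j: "l dvd 2 * j" using prim_dvd[OF pr] l by simp
    show False
    proof (cases "odd l")
      case True
      hence "coprime l 2" by simp
      hence "l dvd j" using l2j by (simp add: coprime_dvd_mult_right_iff)
      then obtain t where "j = l * t" by blast
      hence "\<omega> ^ j = 1" using prim_facts(4)[OF pr l] by (simp add: power_mult)
      thus False using wj m1 by simp
    next
      case False
      hence "4 dvd 2 * j" using lc l2j dvd_trans by blast
      hence "even j" by presburger
      thus False using \<open>odd j\<close> by simp
    qed
  qed
qed

lemma alg1:
  fixes \<omega> :: "'a::field"
  assumes ch: "CHAR('a) = p" and pp: "prime p"
    and pr: "primitive_root_unity l \<omega>" and l: "2 < l" and ld: "l dvd p - 1"
    and nn: "n = l * p"
    and u: "u \<noteq> 0" and w: "w \<noteq> 0" and j: "2 \<le> j" "j < n"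
  shows "\<not> ([:-1, 1:] ^ 1 * [:1, 1:] ^ 0 * [:-\<omega>, 1:] ^ 3) dvd ([:u, v:] + monom w j)"
proof
  assume d: "([:-1, 1:] ^ 1 * [:1, 1:] ^ 0 * [:-\<omega>, 1:] ^ 3) dvd ([:u, v:] + monom w j)"
  have "[:-\<omega>, 1:] ^ 3 dvd ([:-1, 1:] ^ 1 * [:1, 1:] ^ 0 * [:-\<omega>, 1:] ^ 3)"
    by (simp only: power_0 mult_1_right) (rule dvd_triv_right)
  hence d3: "[:-\<omega>, 1:] ^ 3 dvd ([:u, v:] + monom w j)" using d by (rule dvd_trans)
  have "[:-1, 1:] dvd ([:-1, 1:] ^ 1 * [:1, 1:] ^ 0 * [:-\<omega>, 1:] ^ 3)"
    by (simp only: power_0 power_one_right mult_1_right) (rule dvd_triv_left)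
  hence d1: "[:-1, 1:] dvd ([:u, v:] + monom w j)" using d by (rule dvd_trans)
  from alg_core[OF u w j(1) prim_facts(1)[OF pr l] d3]
  have pj: "p dvd j" and v0: "v = 0" and e1: "u + w * \<omega> ^ j = 0" using ch by auto
  from root1[OF d1 j(1)] v0 have e2: "u + w = 0" by simp
  have "w * \<omega> ^ j = w * 1" using e1 e2 by (metis add_left_cancel mult_1_right)
  hence "\<omega> ^ j = 1" using w by simp
  hence lj: "l dvd j" using prim_dvd[OF pr] l by simp
  have p1: "p > 1" using pp prime_gt_1_nat by blast
  have "l * p dvd j" using divides_mult[OF lj pj cop_lp[OF ld p1]] .
  hence "l * p \<le> j" by (rule dvd_imp_le) (use j in simp)
  thus False using j nn by simp
qed

lemma alg2:
  fixes \<omega> :: "'a::field"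
  assumes ch: "CHAR('a) = p" and pp: "prime p" and op: "odd p"
    and pr: "primitive_root_unity l \<omega>" and l: "2 < l" and ld: "l dvd p - 1"
    and lc: "odd l \<or> 4 dvd l" and nn: "n = (if even l then l * p else 2 * l * p)"
    and u: "u \<noteq> 0" and w: "w \<noteq> 0" and j: "2 \<le> j" "j < n"
  shows "\<not> ([:-1, 1:] ^ 0 * [:1, 1:] ^ 3 * [:-\<omega>, 1:] ^ 1) dvd ([:u, v:] + monom w j)"
proof
  assume d: "([:-1, 1:] ^ 0 * [:1, 1:] ^ 3 * [:-\<omega>, 1:] ^ 1) dvd ([:u, v:] + monom w j)"
  have "[:-(-1), 1:] ^ 3 dvd ([:-1, 1:] ^ 0 * [:1, 1:] ^ 3 * [:-\<omega>, 1:] ^ 1)"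
    by (simp only: minus_minus power_0 mult_1_left power_one_right) (rule dvd_triv_left)
  hence d3: "[:-(-1), 1:] ^ 3 dvd ([:u, v:] + monom w j)" using d by (rule dvd_trans)
  have "[:-\<omega>, 1:] dvd ([:-1, 1:] ^ 0 * [:1, 1:] ^ 3 * [:-\<omega>, 1:] ^ 1)"
    by (simp only: power_0 mult_1_left power_one_right) (rule dvd_triv_right)
  hence d1: "[:-\<omega>, 1:] dvd ([:u, v:] + monom w j)" using d by (rule dvd_trans)
  from alg_core[OF u w j(1) _ d3]
  have pj: "p dvd j" and v0: "v = 0" and e1: "u + w * (-1) ^ j = 0" using ch by auto
  from root1[OF d1 j(1)] v0 have e2: "u + w * \<omega> ^ j = 0" by simp
  have "w * \<omega> ^ j = w * (-1) ^ j" using e1 e2 by (metis add_left_cancel)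
  hence e: "\<omega> ^ j = (-1) ^ j" using w by simp
  show False using sign_contra[OF ch pp op pr l ld lc nn pj _ j(2) e] j by simp
qed

lemma alg3:
  fixes \<omega> :: "'a::field"
  assumes ch: "CHAR('a) = p" and pp: "prime p" and op: "odd p"
    and pr: "primitive_root_unity l \<omega>" and l: "2 < l" and ld: "l dvd p - 1"
    and lc: "odd l \<or> 4 dvd l" and nn: "n = (if even l then l * p else 2 * l * p)"
    and u: "u \<noteq> 0" and w: "w \<noteq> 0" and j: "2 \<le> j" "j < n"
  shows "\<not> ([:-1, 1:] ^ 0 * [:1, 1:] ^ 1 * [:-\<omega>, 1:] ^ 3) dvd ([:u, v:] + monom w j)"
proof
  assume d: "([:-1, 1:] ^ 0 * [:1, 1:] ^ 1 * [:-\<omega>, 1:] ^ 3) dvd ([:u, v:] + monom w j)"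
  have "[:-\<omega>, 1:] ^ 3 dvd ([:-1, 1:] ^ 0 * [:1, 1:] ^ 1 * [:-\<omega>, 1:] ^ 3)"
    by (simp only: power_0 mult_1_left) (rule dvd_triv_right)
  hence d3: "[:-\<omega>, 1:] ^ 3 dvd ([:u, v:] + monom w j)" using d by (rule dvd_trans)
  have "[:-(-1), 1:] dvd ([:-1, 1:] ^ 0 * [:1, 1:] ^ 1 * [:-\<omega>, 1:] ^ 3)"
    by (simp only: minus_minus power_0 mult_1_left power_one_right) (rule dvd_triv_left)
  hence d1: "[:-(-1), 1:] dvd ([:u, v:] + monom w j)" using d by (rule dvd_trans)
  from alg_core[OF u w j(1) prim_facts(1)[OF pr l] d3]
  have pj: "p dvd j" and v0: "v = 0" and e1: "u + w * \<omega> ^ j = 0" using ch by auto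
  from root1[OF d1 j(1)] v0 have e2: "u + w * (-1) ^ j = 0" by simp
  have "w * \<omega> ^ j = w * (-1) ^ j" using e1 e2 by (metis add_left_cancel)
  hence e: "\<omega> ^ j = (-1) ^ j" using w by simp
  show False using sign_contra[OF ch pp op pr l ld lc nn pj _ j(2) e] j by simp
qed

lemma frob:
  assumes ch: "CHAR('a::field) = p" and pp: "prime p" and op: "odd p"
  shows "(monom 1 m - 1 :: 'a poly) ^ p = monom 1 (m * p) - 1"
proof -
  have chp: "CHAR('a poly) = p" using ch by simp
  have "(monom 1 m + (- 1) :: 'a poly) ^ p = monom 1 m ^ p + (- 1) ^ p"
    by (rule freshmans_dream) (use chp pp in auto)
  also have "\<dots> = monom 1 (m * p) + (- 1)" using op by (simp add: monom_power)
  finally show ?thesis by simp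
qed

lemma roots2:
  fixes q :: "'a::field poly"
  assumes "poly q a = 0" "poly q b = 0" "a \<noteq> b"
  shows "[:-a, 1:] * [:-b, 1:] dvd q"
proof -
  from assms(1) obtain q1 where q: "q = [:-a, 1:] * q1" by (auto simp: poly_eq_0_iff_dvd elim!: dvdE)
  have "(b - a) * poly q1 b = 0" using assms(2) by (auto simp: q)
  hence "poly q1 b = 0" using assms(3) by auto
  hence "[:-b, 1:] dvd q1" by (simp add: poly_eq_0_iff_dvd)
  thus ?thesis unfolding q by (rule mult_dvd_mono[OF dvd_refl])
qed

lemma roots3:
  fixes q :: "'a::field poly"
  assumes "poly q a = 0" "poly q b = 0" "poly q c = 0" "a \<noteq> b" "a \<noteq> c" "b \<noteq> c"
  shows "[:-a, 1:] * [:-b, 1:] * [:-c, 1:] dvd q"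
proof -
  from assms(1) obtain q1 where q: "q = [:-a, 1:] * q1" by (auto simp: poly_eq_0_iff_dvd elim!: dvdE)
  have "(b - a) * poly q1 b = 0" using assms(2) by (auto simp: q)
  hence r1: "poly q1 b = 0" using assms(4) by auto
  have "(c - a) * poly q1 c = 0" using assms(3) by (auto simp: q)
  hence r2: "poly q1 c = 0" using assms(5) by auto
  have "[:-b, 1:] * [:-c, 1:] dvd q1" using roots2[OF r1 r2 assms(6)] .
  thus ?thesis unfolding q mult.assoc by (rule mult_dvd_mono[OF dvd_refl])
qed

lemma poly_xn1: "poly (monom 1 m - 1) (x::'a::field) = x ^ m - 1"
  by (simp add: poly_monom)

lemma gdvd_gen:
  fixes h g :: "'a::field poly"
  assumes ch: "CHAR('a) = p" and pp: "prime p" and op: "odd p" and p3: "3 \<le> p"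
    and hd: "h dvd monom 1 m - 1" and gh: "g dvd h ^ 3"
  shows "g dvd monom 1 (m * p) - 1"
proof -
  have "h ^ p dvd (monom 1 m - 1) ^ p" using hd by (rule dvd_power_same)
  hence "h ^ p dvd monom 1 (m * p) - 1" using frob[OF ch pp op] by simp
  moreover have "h ^ 3 dvd h ^ p" using p3 by (rule le_imp_power_dvd)
  ultimately show ?thesis using gh dvd_trans by blast
qed

lemma card_deg:
  assumes "CARD('a::{field,finite}) = p" and that: "k > 0"
  shows "card {q :: 'a poly. degree q < k} = p ^ k"
proof -
  define f where "f = (\<lambda>q::'a poly. restrict (coeff q) {..<k})"
  have inj: "inj_on f {q. degree q < k}"
  proof (rule inj_onI)
    fix x y assume x: "x \<in> {q. degree q < k}" and y: "y \<in> {q. degree q < k}" and e: "f x = f y"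
    show "x = y"
    proof (rule poly_eqI)
      fix i show "coeff x i = coeff y i"
      proof (cases "i < k")
        case True thus ?thesis using e unfolding f_def by (metis lessThan_iff restrict_apply')
      next
        case False thus ?thesis using x y by (simp add: coeff_eq_0)
      qed
    qed
  qed
  have img: "f ` {q. degree q < k} = PiE {..<k} (\<lambda>_. UNIV)"
  proof (intro set_eqI iffI)
    fix h assume "h \<in> f ` {q. degree q < k}"
    then obtain q where "h = f q" by auto
    thus "h \<in> PiE {..<k} (\<lambda>_. UNIV)" by (simp add: f_def restrict_PiE_iff del: restrict_PiE)
  next
    fix h assume h: "h \<in> PiE {..<k} (\<lambda>_. (UNIV :: 'a set))"
    define q where "q = Poly (map h [0..<k])"
    have cq: "coeff q i = (if i < k then h i else 0)" for i
      by (simp add: q_def nth_default_def)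
    have "degree q \<le> k - 1" by (rule degree_le) (auto simp: cq)
    hence dq: "degree q < k" using that by linarith
    have "f q = h"
    proof
      fix i show "f q i = h i"
        using h by (cases "i < k") (auto simp: f_def cq PiE_def extensional_def)
    qed
    thus "h \<in> f ` {q. degree q < k}" using dq by blast
  qed
  have "card {q :: 'a poly. degree q < k} = card (PiE {..<k} (\<lambda>_. (UNIV :: 'a set)))"
    using card_image[OF inj] img by simp
  also have "\<dots> = p ^ k" using assms by (simp add: card_PiE)
  finally show ?thesis .
qed

lemma card_code:
  fixes g :: "'a::{field,finite} poly"
  assumes "CARD('a) = p" and g0: "g \<noteq> 0" and dn: "degree g < n"
  shows "card {c. g dvd c \<and> degree c < n} = p ^ (n - degree g)"
proof -
  have img: "{c. g dvd c \<and> degree c < n} = (\<lambda>q. q * g) ` {q. degree q < n - degree g}"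
  proof (intro set_eqI iffI)
    fix c assume c: "c \<in> {c. g dvd c \<and> degree c < n}"
    then obtain q where q: "c = g * q" by (auto elim!: dvdE)
    have "degree q < n - degree g"
    proof (cases "q = 0")
      case True thus ?thesis using dn by simp
    next
      case False
      hence "degree c = degree g + degree q" using g0 q by (simp add: degree_mult_eq)
      moreover have "degree c < n" using c by simp
      ultimately show ?thesis by linarith
    qed
    thus "c \<in> (\<lambda>q. q * g) ` {q. degree q < n - degree g}" using q by (auto simp: mult.commute)
  next
    fix c assume "c \<in> (\<lambda>q. q * g) ` {q. degree q < n - degree g}"
    then obtain q where q: "c = q * g" "degree q < n - degree g" by auto
    have "degree c \<le> degree q + degree g" using q(1) degree_mult_le by blast
    thus "c \<in> {c. g dvd c \<and> degree c < n}" using q by auto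
  qed
  have inj: "inj_on (\<lambda>q. q * g) {q. degree q < n - degree g}"
    using g0 by (auto intro!: inj_onI)
  show ?thesis using img card_image[OF inj] card_deg[OF assms(1), of "n - degree g"] dn by simp
qed

lemma mds_gen:
  fixes g :: "'a::{field,finite} poly"
  assumes card: "CARD('a) = p" and n: "n \<ge> 6" and gd: "g dvd monom 1 n - 1" and dg: "degree g = 4"
    and alg: "\<And>u v w j. u \<noteq> 0 \<Longrightarrow> w \<noteq> 0 \<Longrightarrow> 2 \<le> j \<Longrightarrow> j < n \<Longrightarrow>
                \<not> g dvd ([:u, v:] + monom w j)"
  shows "MDS_symbol_pair p n (cyclic_code n g) 6"
proof -
  have n0: "n > 0" using n by simp
  define S where "S = {c. g dvd c \<and> degree c < n}"
  have C: "cyclic_code n g = vecn n ` S" unfolding S_def by (rule code_eq[OF gd n0])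
  have g0: "g \<noteq> 0" using dg by auto
  have inj: "inj_on (vecn n) S"
  proof (rule inj_onI)
    fix c d assume cd: "c \<in> S" "d \<in> S" "vecn n c = vecn n d"
    have "polv n (vecn n c) = c" using cd(1) by (intro polv_vecn) (simp add: S_def)
    moreover have "polv n (vecn n d) = d" using cd(2) by (intro polv_vecn) (simp add: S_def)
    ultimately show "c = d" using cd(3) by metis
  qed
  have cardC: "card (cyclic_code n g) = p ^ (n + 2 - 6)"
  proof -
    have "card (cyclic_code n g) = card S" unfolding C by (rule card_image[OF inj])
    also have "\<dots> = p ^ (n - 4)" unfolding S_def using card_code[OF card g0, of n] dg n by simp
    finally show ?thesis by simp
  qed
  have lb: "6 \<le> sp_dist n x y" if x: "x \<in> cyclic_code n g" and y: "y \<in> cyclic_code n g" and xy: "x \<noteq> y" for x y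
  proof -
    obtain c where c: "x = vecn n c" "c \<in> S" using x C by auto
    obtain d where d: "y = vecn n d" "d \<in> S" using y C by auto
    have e: "sp_dist n x y = sp_weight n (vecn n (c - d))"
      unfolding sp_dist_def sp_weight_def c d
      by (intro arg_cong[where f=card] Collect_cong) (auto simp: vecn_def n0)
    have "c - d \<in> S" using c d by (auto simp: S_def intro: dvd_diff le_less_trans[OF degree_diff_le_max])
    hence iC: "inC g n (vecn n (c - d))" using inC_iff[OF n0, of "vecn n (c - d)" g] unfolding S_def by blast
    obtain i where "x i \<noteq> y i" using xy by auto
    hence "vecn n (c - d) i \<noteq> 0" unfolding c d by (auto simp: vecn_def split: if_splits)
    thus ?thesis using lower_bound[OF n gd dg alg iC] e by simp
  qed
  define A where "A = {sp_dist n x y | x y. x \<in> cyclic_code n g \<and> y \<in> cyclic_code n g \<and> x \<noteq> y}"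
  have fA: "finite A"
  proof (rule finite_subset[of _ "{..n}"])
    show "A \<subseteq> {..n}"
    proof
      fix a assume "a \<in> A"
      then obtain x y :: "nat \<Rightarrow> 'a" where "a = sp_dist n x y" unfolding A_def by blast
      moreover have "sp_dist n x y \<le> card {0..<n}" unfolding sp_dist_def by (rule card_mono) auto
      ultimately show "a \<in> {..n}" by simp
    qed
  qed simp
  have gS: "g \<in> S" using dg n by (simp add: S_def)
  have zS: "0 \<in> S" using n0 by (simp add: S_def)
  have gC: "vecn n g \<in> cyclic_code n g" using C gS by blast
  have zC: "vecn n 0 \<in> cyclic_code n g" using C zS by blast
  have z0: "vecn n (0 :: 'a poly) = (\<lambda>_. 0)" by (simp add: vecn_def fun_eq_iff)
  have g4: "vecn n g 4 \<noteq> 0" using n g0 dg by (auto simp: vecn_def dest: leading_coeff_neq_0)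
  have gne: "vecn n g \<noteq> vecn n 0" using g4 z0 by auto
  have "sp_dist n (vecn n g) (vecn n 0) = sp_weight n (vecn n g)"
    unfolding sp_dist_def sp_weight_def z0 by simp
  moreover have "sp_weight n (vecn n g) \<le> 6"
  proof -
    have "{i \<in> {0..<n}. (vecn n g i, vecn n g ((i + 1) mod n)) \<noteq> (0, 0)} \<subseteq> set [0, 1, 2, 3, 4, n - 1]"
    proof
      fix i assume i: "i \<in> {i \<in> {0..<n}. (vecn n g i, vecn n g ((i + 1) mod n)) \<noteq> (0, 0)}"
      show "i \<in> set [0, 1, 2, 3, 4, n - 1]"
      proof (rule ccontr)
        assume "i \<notin> set [0, 1, 2, 3, 4, n - 1]"
        hence i5: "5 \<le> i" "i + 1 < n" using i by auto
        hence "(i + 1) mod n = i + 1" by simp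
        moreover have "coeff g i = 0" "coeff g (i + 1) = 0" using i5 dg by (auto intro: coeff_eq_0)
        ultimately show False using i i5 by (simp add: vecn_def)
      qed
    qed
    hence "sp_weight n (vecn n g) \<le> card (set [0, 1, 2, 3, 4, n - 1])"
      unfolding sp_weight_def by (intro card_mono) auto
    also have "\<dots> \<le> 6" using card_length[of "[0, 1, 2, 3, 4, n - 1]"] by simp
    finally show ?thesis .
  qed
  moreover have "6 \<le> sp_dist n (vecn n g) (vecn n 0)" by (rule lb[OF gC zC gne])
  ultimately have "sp_dist n (vecn n g) (vecn n 0) = 6" by simp
  hence sixA: "6 \<in> A" unfolding A_def mem_Collect_eq
    by (intro exI[of _ "vecn n g"] exI[of _ "vecn n 0"] conjI) (use gC zC gne in auto)
  have "min_sp_dist n (cyclic_code n g) = 6"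
    unfolding min_sp_dist_def A_def[symmetric]
  proof (rule Min_eqI[OF fA])
    fix a assume "a \<in> A"
    thus "6 \<le> a" unfolding A_def using lb by blast
  qed (rule sixA)
  thus ?thesis using cardC by (simp add: MDS_symbol_pair_def)
qed

lemma deg3: "degree ([:a, 1:] ^ i * [:b, 1:] ^ j * [:c, 1:] ^ k :: 'a::field poly) = i + j + k"
proof -
  have nz: "[:x, 1:] ^ t \<noteq> (0 :: 'a poly)" for x t by simp
  have ab: "[:a, 1:] ^ i * [:b, 1:] ^ j \<noteq> (0 :: 'a poly)" using nz by simp
  show ?thesis by (simp only: degree_mult_eq[OF ab nz] degree_mult_eq[OF nz nz] degree_linear_power)
qed

theorem proposition3p3:
  fixes p l n r1 r2 r3 :: nat and \<omega> :: "'a::{field,finite}"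
  assumes "prime p" and "odd p" and "CARD('a) = p"
    and "l > 2" and "l dvd p - 1"
    and "primitive_root_unity l \<omega>"
    and "(r1, r2, r3) \<in> {(1, 0, 3), (0, 3, 1), (0, 1, 3)}"
    and "r2 = 0 \<Longrightarrow> n = l * p"
    and "r2 \<noteq> 0 \<Longrightarrow> n = (if even l then l * p else 2 * l * p)"
    and "(r1, r2, r3) \<in> {(0, 3, 1), (0, 1, 3)} \<Longrightarrow> odd l \<or> 4 dvd l"
  shows "MDS_symbol_pair p n
           (cyclic_code n ([:-1, 1:] ^ r1 * [:1, 1:] ^ r2 * [:-\<omega>, 1:] ^ r3)) 6"
proof -
  note pp = assms(1) and op = assms(2) and cardp = assms(3) and l = assms(4) and ld = assms(5)
    and pr = assms(6)
  have ch: "CHAR('a) = p" by (rule CHAR_eq_card[OF cardp pp])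
  have p1: "p > 1" using pp prime_gt_1_nat by blast
  have lp: "l \<le> p - 1" using ld p1 by (intro dvd_imp_le) auto
  have p3: "3 \<le> p" using lp l by linarith
  have lpn: "l * p \<ge> 9" using mult_le_mono[of 3 l 3 p] l p3 by linarith
  have w0: "\<omega> \<noteq> 0" and w1: "\<omega> \<noteq> 1" and wm1: "\<omega> \<noteq> -1" and wl: "\<omega> ^ l = 1"
    using prim_facts[OF pr l] by auto
  have m1: "(-1::'a) \<noteq> 1" using neg1_ne_1[OF ch op] .
  from assms(7) consider "r1 = 1 \<and> r2 = 0 \<and> r3 = 3" | "r1 = 0 \<and> r2 = 3 \<and> r3 = 1" | "r1 = 0 \<and> r2 = 1 \<and> r3 = 3"
    by auto
  then show ?thesis
  proof cases
    case 1
    hence r: "r1 = 1" "r2 = 0" "r3 = 3" by auto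
    have nn: "n = l * p" using assms(8) r by simp
    have n6: "n \<ge> 6" using nn lpn by simp
    define h where "h = [:-1, 1:] * [:-\<omega>, 1:]"
    have hd: "h dvd monom 1 l - 1" unfolding h_def
      by (rule roots2) (use wl w1 in \<open>auto simp: poly_monom\<close>)
    have gh: "[:-1, 1:] ^ 1 * [:1, 1:] ^ 0 * [:-\<omega>, 1:] ^ 3 dvd h ^ 3"
    proof -
      have "[:-1, 1:] * [:-\<omega>, 1:] ^ 3 dvd [:-1, 1:] ^ 3 * [:-\<omega>, 1:] ^ 3"
        by (rule mult_dvd_mono[OF dvd_power dvd_refl]) simp
      moreover have "h ^ 3 = [:-1, 1:] ^ 3 * [:-\<omega>, 1:] ^ 3" by (simp only: h_def power_mult_distrib)
      moreover have "[:-1, 1:] ^ 1 * [:1, 1:] ^ 0 * [:-\<omega>, 1:] ^ 3 = [:-1, 1:] * [:-\<omega>, 1:] ^ 3"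
        by (simp only: power_one_right power_0 mult_1_right)
      ultimately show ?thesis by simp
    qed
    have gd: "[:-1, 1:] ^ 1 * [:1, 1:] ^ 0 * [:-\<omega>, 1:] ^ 3 dvd monom 1 n - 1"
      using gdvd_gen[OF ch pp op p3 hd gh] nn by simp
    have dg: "degree ([:-1, 1:] ^ 1 * [:1, 1:] ^ 0 * [:-\<omega>, 1:] ^ 3) = 4"
      by (subst deg3) simp
    show ?thesis unfolding r
      by (rule mds_gen[OF cardp n6 gd dg alg1[OF ch pp pr l ld nn]])
  next
    case 2
    hence r: "r1 = 0" "r2 = 3" "r3 = 1" by auto
    have nn: "n = (if even l then l * p else 2 * l * p)" using assms(9) r by simp
    have lc: "odd l \<or> 4 dvd l" using assms(10) r by simp
    have n6: "n \<ge> 6" using nn lpn by simp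
    define m where "m = (if even l then l else 2 * l)"
    have nm: "n = m * p" using nn by (simp add: m_def)
    have em: "even m" by (simp add: m_def)
    have wm: "\<omega> ^ m = 1"
    proof (cases "even l")
      case True thus ?thesis using wl by (simp add: m_def)
    next
      case False
      have "\<omega> ^ (2 * l) = (\<omega> ^ l) ^ 2" by (metis power_mult mult.commute)
      thus ?thesis using False wl by (simp add: m_def)
    qed
    define h where "h = [:-1, 1:] * [:-(-1), 1:] * [:-\<omega>, 1:]"
    have hd: "h dvd monom 1 m - 1" unfolding h_def
      by (rule roots3) (use wm w1 wm1 m1 em in \<open>auto simp: poly_monom\<close>)
    have gh: "[:-1, 1:] ^ 0 * [:1, 1:] ^ 3 * [:-\<omega>, 1:] ^ 1 dvd h ^ 3"
    proof -
      have "[:1, 1:] ^ 3 * [:-\<omega>, 1:] dvd [:1, 1:] ^ 3 * [:-\<omega>, 1:] ^ 3"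
        by (rule mult_dvd_mono[OF dvd_refl dvd_power]) simp
      hence "[:1, 1:] ^ 3 * [:-\<omega>, 1:] dvd [:-1, 1:] ^ 3 * ([:1, 1:] ^ 3 * [:-\<omega>, 1:] ^ 3)"
        by (rule dvd_mult)
      moreover have "h ^ 3 = [:-1, 1:] ^ 3 * ([:1, 1:] ^ 3 * [:-\<omega>, 1:] ^ 3)"
        by (simp only: h_def power_mult_distrib mult.assoc minus_minus)
      moreover have "[:-1, 1:] ^ 0 * [:1, 1:] ^ 3 * [:-\<omega>, 1:] ^ 1 = [:1, 1:] ^ 3 * [:-\<omega>, 1:]"
        by (simp only: power_one_right power_0 mult_1_left)
      ultimately show ?thesis by simp
    qed
    have gd: "[:-1, 1:] ^ 0 * [:1, 1:] ^ 3 * [:-\<omega>, 1:] ^ 1 dvd monom 1 n - 1"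
      using gdvd_gen[OF ch pp op p3 hd gh] nm by simp
    have dg: "degree ([:-1, 1:] ^ 0 * [:1, 1:] ^ 3 * [:-\<omega>, 1:] ^ 1) = 4"
      by (subst deg3) simp
    show ?thesis unfolding r
      by (rule mds_gen[OF cardp n6 gd dg alg2[OF ch pp op pr l ld lc nn]])
  next
    case 3
    hence r: "r1 = 0" "r2 = 1" "r3 = 3" by auto
    have nn: "n = (if even l then l * p else 2 * l * p)" using assms(9) r by simp
    have lc: "odd l \<or> 4 dvd l" using assms(10) r by simp
    have n6: "n \<ge> 6" using nn lpn by simp
    define m where "m = (if even l then l else 2 * l)"
    have nm: "n = m * p" using nn by (simp add: m_def)
    have em: "even m" by (simp add: m_def)
    have wm: "\<omega> ^ m = 1"
    proof (cases "even l")
      case True thus ?thesis using wl by (simp add: m_def)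
    next
      case False
      have "\<omega> ^ (2 * l) = (\<omega> ^ l) ^ 2" by (metis power_mult mult.commute)
      thus ?thesis using False wl by (simp add: m_def)
    qed
    define h where "h = [:-1, 1:] * [:-(-1), 1:] * [:-\<omega>, 1:]"
    have hd: "h dvd monom 1 m - 1" unfolding h_def
      by (rule roots3) (use wm w1 wm1 m1 em in \<open>auto simp: poly_monom\<close>)
    have gh: "[:-1, 1:] ^ 0 * [:1, 1:] ^ 1 * [:-\<omega>, 1:] ^ 3 dvd h ^ 3"
    proof -
      have "[:1, 1:] * [:-\<omega>, 1:] ^ 3 dvd [:1, 1:] ^ 3 * [:-\<omega>, 1:] ^ 3"
        by (rule mult_dvd_mono[OF dvd_power dvd_refl]) simp
      hence "[:1, 1:] * [:-\<omega>, 1:] ^ 3 dvd [:-1, 1:] ^ 3 * ([:1, 1:] ^ 3 * [:-\<omega>, 1:] ^ 3)"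
        by (rule dvd_mult)
      moreover have "h ^ 3 = [:-1, 1:] ^ 3 * ([:1, 1:] ^ 3 * [:-\<omega>, 1:] ^ 3)"
        by (simp only: h_def power_mult_distrib mult.assoc minus_minus)
      moreover have "[:-1, 1:] ^ 0 * [:1, 1:] ^ 1 * [:-\<omega>, 1:] ^ 3 = [:1, 1:] * [:-\<omega>, 1:] ^ 3"
        by (simp only: power_one_right power_0 mult_1_left)
      ultimately show ?thesis by simp
    qed
    have gd: "[:-1, 1:] ^ 0 * [:1, 1:] ^ 1 * [:-\<omega>, 1:] ^ 3 dvd monom 1 n - 1"
      using gdvd_gen[OF ch pp op p3 hd gh] nm by simp
    have dg: "degree ([:-1, 1:] ^ 0 * [:1, 1:] ^ 1 * [:-\<omega>, 1:] ^ 3) = 4"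
      by (subst deg3) simp
    show ?thesis unfolding r
      by (rule mds_gen[OF cardp n6 gd dg alg3[OF ch pp op pr l ld lc nn]])
  qed
qed

end
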